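(* Let $\gamma$ be a norm on $\mathbb{R}^d$, let $D\subset\mathbb{R}^d$ be finite with positive weights $w_d$, and $w_D=\sum_{d\in D}w_d$. Then for every $m\in\mathrm{EH}_\gamma(D)$ there exist $c\in\mathbb{R}^d$ and $w_c\in(0,w_D)$ such that $m$ is a Fermat–Weber point of the weighted set $(D,w)+(c,w_c)$.
   Context: A norm is a symmetric gauge: the Minkowski functional $\gamma$ of a convex compact set $B_\gamma$, symmetric about and containing the origin in its interior. $\gamma^\circ$ is the dual norm, $B_{\gamma^\circ}$ its unit ball. A Fermat–Weber point of a finite positively weighted set $(S,u)$ is a minimizer of $x\mapsto\sum_{s\in S}u_s\gamma(x-s)$. For weighted sets, $(D,w)+(C,v)$ denotes the weighted set $D\cup C$ with weight $w_x+v_x$ at $x$ (where $w_x=0$ for $x\notin D$ and $v_x=0$ for $x\notin C$). For $p\in B_{\gamma^\circ}$: if $\gamma^\circ(p)=1$, $N(p)$ is the cone $\mathbb{R}_{\ge0}F(p)$ generated by the exposed face $F(p)=\{x\in B_\gamma:\langle p,x\rangle=1\}$; if $\gamma^\circ(p)<1$, $N(p)=\{0\}$. For finite $S$ and $\pi=(p_s)_{s\in S}\subset B_{\gamma^\circ}$, $C_\pi=\bigcap_{s\in S}(s+N(p_s))$; a nonempty $C_\pi$ is an elementary convex set for $S$. The elementary hull $\mathrm{EH}_\gamma(S)$ is the union of all bounded elementary convex sets for $S$. *)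

theory Defs
  imports "HOL-Analysis.Analysis"
begin

definition norm_ball :: "'a::euclidean_space set \<Rightarrow> bool" where
  "norm_ball B \<longleftrightarrow> convex B \<and> compact B \<and> 0 \<in> interior B \<and> (\<forall>x\<in>B. - x \<in> B)"

definition mink :: "'a::euclidean_space set \<Rightarrow> 'a \<Rightarrow> real" where
  "mink B x = Inf {t. 0 < t \<and> x \<in> (\<lambda>y. t *\<^sub>R y) ` B}"

definition dual_mink :: "'a::euclidean_space set \<Rightarrow> 'a \<Rightarrow> real" where
  "dual_mink B p = Sup ((\<lambda>x. p \<bullet> x) ` B)"

definition dual_ball :: "'a::euclidean_space set \<Rightarrow> 'a set" where
  "dual_ball B = {p. dual_mink B p \<le> 1}"

definition exposed_face :: "'a::euclidean_space set \<Rightarrow> 'a \<Rightarrow> 'a set" where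
  "exposed_face B p = {x\<in>B. p \<bullet> x = 1}"

definition Ncone :: "'a::euclidean_space set \<Rightarrow> 'a \<Rightarrow> 'a set" where
  "Ncone B p = (if dual_mink B p = 1
      then {t *\<^sub>R x | t x. 0 \<le> t \<and> x \<in> exposed_face B p} else {0})"

definition elem_set :: "'a::euclidean_space set \<Rightarrow> 'a set \<Rightarrow> ('a \<Rightarrow> 'a) \<Rightarrow> 'a set" where
  "elem_set B S \<pi> = (\<Inter>s\<in>S. (\<lambda>y. s + y) ` Ncone B (\<pi> s))"

definition elementary_hull :: "'a::euclidean_space set \<Rightarrow> 'a set \<Rightarrow> 'a set" where
  "elementary_hull B S = \<Union>{elem_set B S \<pi> | \<pi>. (\<forall>s\<in>S. \<pi> s \<in> dual_ball B)
      \<and> elem_set B S \<pi> \<noteq> {} \<and> bounded (elem_set B S \<pi>)}"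

definition fermat_weber_point ::
  "'a::euclidean_space set \<Rightarrow> 'a set \<Rightarrow> ('a \<Rightarrow> real) \<Rightarrow> 'a \<Rightarrow> bool" where
  "fermat_weber_point B S u x \<longleftrightarrow>
     (\<forall>y. (\<Sum>s\<in>S. u s * mink B (x - s)) \<le> (\<Sum>s\<in>S. u s * mink B (y - s)))"

end

theory Submission
  imports Defs
begin

lemma nb_ball: "norm_ball B \<Longrightarrow> \<exists>e>0. ball 0 e \<subseteq> B"
  unfolding norm_ball_def using mem_interior by blast

lemma nb_zero: "norm_ball B \<Longrightarrow> 0 \<in> B"
  unfolding norm_ball_def using interior_subset by blast

lemma mink_ne:
  assumes "norm_ball B"
  shows "\<exists>t>0. x \<in> (\<lambda>y. t *\<^sub>R y) ` B"
proof -
  obtain e where e: "e > 0" "ball 0 e \<subseteq> B" using nb_ball[OF assms] by blast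
  define t where "t = 2 * norm x / e + 1"
  have t: "t > 0" using e by (simp add: t_def add_nonneg_pos)
  have et: "e * t = 2 * norm x + e" using e by (simp add: t_def field_simps)
  have "norm x < e * t" using et e norm_ge_zero[of x] by linarith
  hence "norm ((1/t) *\<^sub>R x) < e" using t e by (simp add: field_simps)
  hence "(1/t) *\<^sub>R x \<in> B" using e by auto
  moreover have "x = t *\<^sub>R ((1/t) *\<^sub>R x)" using t by simp
  ultimately show ?thesis using t by blast
qed

lemma mink_nonneg:
  assumes "norm_ball B"
  shows "0 \<le> mink B x"
  unfolding mink_def
  apply (rule cInf_greatest)
  using mink_ne[OF assms, of x] by auto

lemma mink_le:
  assumes "norm_ball B" "0 \<le> t" "x \<in> (\<lambda>y. t *\<^sub>R y) ` B"
  shows "mink B x \<le> t"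
proof (cases "t = 0")
  case False
  hence "t > 0" using assms by simp
  then show ?thesis unfolding mink_def
    apply (intro cInf_lower)
    using assms by (auto intro!: bdd_belowI[where m=0])
next
  case True
  hence x0: "x = 0" using assms by auto
  show ?thesis
  proof (rule field_le_epsilon)
    fix e :: real assume e: "0 < e"
    have "x \<in> (\<lambda>y. e *\<^sub>R y) ` B" using x0 nb_zero[OF assms(1)]
      by (metis image_eqI scaleR_zero_right)
    hence "mink B x \<le> e" unfolding mink_def
      apply (intro cInf_lower)
      using e by (auto intro!: bdd_belowI[where m=0])
    then show "mink B x \<le> t + e" using True by simp
  qed
qed

lemma dual_bdd:
  assumes "norm_ball B"
  shows "bdd_above ((\<lambda>x. p \<bullet> x) ` B)"
proof -
  have "bounded B" using assms unfolding norm_ball_def using compact_imp_bounded by blast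
  then obtain R where R: "\<forall>x\<in>B. norm x \<le> R" unfolding bounded_pos by blast
  show ?thesis
  proof (rule bdd_aboveI[where M="norm p * R"])
    fix y assume "y \<in> (\<lambda>x. p \<bullet> x) ` B"
    then obtain x where x: "x \<in> B" "y = p \<bullet> x" by auto
    have "p \<bullet> x \<le> norm p * norm x" by (rule norm_cauchy_schwarz)
    also have "\<dots> \<le> norm p * R" using R x by (simp add: mult_left_mono)
    finally show "y \<le> norm p * R" using x by simp
  qed
qed

lemma dual_upper:
  assumes "norm_ball B" "x \<in> B"
  shows "p \<bullet> x \<le> dual_mink B p"
  unfolding dual_mink_def using dual_bdd[OF assms(1)] assms(2)
  by (simp add: cSup_upper)

lemma dual_nonneg:
  assumes "norm_ball B"
  shows "0 \<le> dual_mink B p"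
  using dual_upper[OF assms nb_zero[OF assms]] by simp

lemma key_ineq:
  assumes "norm_ball B"
  shows "p \<bullet> x \<le> dual_mink B p * mink B x"
proof -
  let ?S = "{t. 0 < t \<and> x \<in> (\<lambda>y. t *\<^sub>R y) ` B}"
  have ne: "?S \<noteq> {}" using mink_ne[OF assms, of x] by auto
  have bound: "p \<bullet> x \<le> dual_mink B p * t" if "t \<in> ?S" for t
  proof -
    from that obtain y where y: "y \<in> B" "x = t *\<^sub>R y" "t > 0" by auto
    have "p \<bullet> x = t * (p \<bullet> y)" using y by simp
    also have "\<dots> \<le> t * dual_mink B p" using dual_upper[OF assms y(1)] y(3)
      by (simp add: mult_left_mono)
    finally show ?thesis by (simp add: mult.commute)
  qed
  show ?thesis
  proof (cases "dual_mink B p = 0")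
    case True
    then obtain t where "t \<in> ?S" using ne by blast
    then show ?thesis using bound True by fastforce
  next
    case False
    hence dp: "dual_mink B p > 0" using dual_nonneg[OF assms, of p] by simp
    have "p \<bullet> x / dual_mink B p \<le> Inf ?S"
      apply (rule cInf_greatest[OF ne])
      using bound dp by (simp add: divide_le_eq mult.commute)
    then show ?thesis using dp unfolding mink_def by (simp add: divide_le_eq mult.commute)
  qed
qed

lemma dual_neg:
  assumes "norm_ball B"
  shows "dual_mink B (-p) = dual_mink B p"
proof -
  have "(\<lambda>x. (-p) \<bullet> x) ` B = (\<lambda>x. p \<bullet> x) ` B"
  proof (intro equalityI subsetI)
    fix y assume "y \<in> (\<lambda>x. (-p) \<bullet> x) ` B"
    then obtain x where "x \<in> B" "y = (-p) \<bullet> x" by auto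
    moreover have "-x \<in> B" using assms \<open>x \<in> B\<close> unfolding norm_ball_def by blast
    ultimately show "y \<in> (\<lambda>x. p \<bullet> x) ` B" by (metis image_eqI inner_minus_left inner_minus_right)
  next
    fix y assume "y \<in> (\<lambda>x. p \<bullet> x) ` B"
    then obtain x where "x \<in> B" "y = p \<bullet> x" by auto
    moreover have "-x \<in> B" using assms \<open>x \<in> B\<close> unfolding norm_ball_def by blast
    ultimately show "y \<in> (\<lambda>x. (-p) \<bullet> x) ` B" by (metis image_eqI inner_minus_left inner_minus_right minus_minus)
  qed
  then show ?thesis unfolding dual_mink_def by simp
qed

lemma dual_attained:
  assumes "norm_ball B"
  shows "\<exists>x0\<in>B. p \<bullet> x0 = dual_mink B p"
proof -
  have "compact ((\<lambda>x. p \<bullet> x) ` B)"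
    using assms unfolding norm_ball_def
    by (intro compact_continuous_image) (auto intro!: continuous_intros)
  moreover have "(\<lambda>x. p \<bullet> x) ` B \<noteq> {}" using nb_zero[OF assms] by auto
  ultimately obtain s where s: "s \<in> (\<lambda>x. p \<bullet> x) ` B" "\<forall>t\<in>(\<lambda>x. p \<bullet> x) ` B. t \<le> s"
    using compact_attains_sup by blast
  have "dual_mink B p = s" unfolding dual_mink_def
    using s by (intro cSup_eq_maximum) auto
  then show ?thesis using s by auto
qed

lemma sum_insert_weights:
  assumes "finite D"
  shows "(\<Sum>x\<in>insert c D. ((if x \<in> D then w x else 0) + (if x = c then wc else 0)) * g x)
      = (\<Sum>d\<in>D. w d * g d) + wc * (g c :: real)"
proof (cases "c \<in> D")
  case True
  then have "insert c D = D" by auto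
  have "(\<Sum>x\<in>D. ((if x \<in> D then w x else 0) + (if x = c then wc else 0)) * g x)
     = (\<Sum>x\<in>D. w x * g x + (if x = c then wc * g x else 0))"
    by (intro sum.cong) (auto simp: distrib_right)
  also have "\<dots> = (\<Sum>d\<in>D. w d * g d) + wc * g c"
    using assms True by (simp add: sum.distrib)
  finally show ?thesis using \<open>insert c D = D\<close> by simp
next
  case False
  have "(\<Sum>x\<in>D. ((if x \<in> D then w x else 0) + (if x = c then wc else 0)) * g x)
        = (\<Sum>d\<in>D. w d * g d)"
    using False by (intro sum.cong) auto
  then show ?thesis using assms False by simp
qed

theorem mainTheorem11:
  fixes B :: "'a::euclidean_space set" and D :: "'a set" and w :: "'a \<Rightarrow> real" and m :: 'a
  assumes "norm_ball B" and "finite D" and "\<forall>d\<in>D. 0 < w d"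
    and "m \<in> elementary_hull B D"
  shows "\<exists>c wc. 0 < wc \<and> wc < (\<Sum>d\<in>D. w d) \<and>
    fermat_weber_point B (insert c D)
      (\<lambda>x. (if x \<in> D then w x else 0) + (if x = c then wc else 0)) m"
proof -
  note nb = assms(1)
  from assms(4) obtain \<pi> where \<pi>: "\<forall>s\<in>D. \<pi> s \<in> dual_ball B" "m \<in> elem_set B D \<pi>"
      "bounded (elem_set B D \<pi>)"
    unfolding elementary_hull_def by blast
  have mem: "m - s \<in> Ncone B (\<pi> s)" if "s \<in> D" for s
    using \<pi>(2) that unfolding elem_set_def by force
  have dle: "dual_mink B (\<pi> s) \<le> 1" if "s \<in> D" for s
    using \<pi>(1) that unfolding dual_ball_def by auto
  have Dne: "D \<noteq> {}"
  proof
    assume "D = {}"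
    then have "elem_set B D \<pi> = UNIV" unfolding elem_set_def by simp
    then show False using \<pi>(3) by simp
  qed
  define W where "W = (\<Sum>d\<in>D. w d)"
  have Wpos: "W > 0" unfolding W_def using Dne assms(2,3)
    by (intro sum_pos) auto
  define q where "q = (\<Sum>s\<in>D. w s *\<^sub>R \<pi> s)"
  have dq: "dual_mink B q < W"
  proof (rule ccontr)
    assume "\<not> dual_mink B q < W"
    hence Wle: "W \<le> dual_mink B q" by simp
    obtain x0 where x0: "x0 \<in> B" "q \<bullet> x0 = dual_mink B q" using dual_attained[OF nb] by blast
    have qx: "q \<bullet> x0 = (\<Sum>s\<in>D. w s * (\<pi> s \<bullet> x0))"
      unfolding q_def by (simp add: inner_sum_left)
    have ple: "\<pi> s \<bullet> x0 \<le> 1" if "s \<in> D" for s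
      using dual_upper[OF nb x0(1), of "\<pi> s"] dle[OF that] by simp
    have "(\<Sum>s\<in>D. w s * (1 - \<pi> s \<bullet> x0)) = W - q \<bullet> x0"
      unfolding qx W_def by (simp add: right_diff_distrib sum_subtractf)
    also have "\<dots> \<le> 0" using Wle x0 by simp
    finally have "(\<Sum>s\<in>D. w s * (1 - \<pi> s \<bullet> x0)) = 0"
      using assms(3) ple by (smt (verit) mult_nonneg_nonneg sum_nonneg)
    hence "\<forall>s\<in>D. w s * (1 - \<pi> s \<bullet> x0) = 0"
      using assms(2,3) ple by (subst (asm) sum_nonneg_eq_0_iff) auto
    have p1: "\<forall>s\<in>D. \<pi> s \<bullet> x0 = 1"
    proof
      fix s assume s: "s \<in> D"
      have "w s * (1 - \<pi> s \<bullet> x0) = 0" "w s > 0" using \<open>\<forall>s\<in>D. w s * (1 - \<pi> s \<bullet> x0) = 0\<close> assms(3) s by auto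
      then show "\<pi> s \<bullet> x0 = 1" by simp
    qed
    have d1: "dual_mink B (\<pi> s) = 1" if "s \<in> D" for s
      using dual_upper[OF nb x0(1), of "\<pi> s"] dle[OF that] p1 that by simp
    have x0nz: "x0 \<noteq> 0" using p1 Dne by auto
    have inset: "m + t *\<^sub>R x0 \<in> elem_set B D \<pi>" if t: "t \<ge> 0" for t
      unfolding elem_set_def
    proof (intro InterI, clarsimp)
      fix s assume s: "s \<in> D"
      have "m - s \<in> Ncone B (\<pi> s)" using mem[OF s] .
      then obtain a x where ax: "0 \<le> a" "x \<in> B" "\<pi> s \<bullet> x = 1" "m - s = a *\<^sub>R x"
        using d1[OF s] unfolding Ncone_def exposed_face_def by auto
      have "a *\<^sub>R x + t *\<^sub>R x0 \<in> Ncone B (\<pi> s)"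
      proof (cases "a + t = 0")
        case True
        hence "a = 0" "t = 0" using ax t by auto
        then show ?thesis using d1[OF s] x0 p1 s unfolding Ncone_def exposed_face_def
          by auto
      next
        case False
        hence at: "a + t > 0" using ax t by auto
        define z where "z = (a/(a+t)) *\<^sub>R x + (t/(a+t)) *\<^sub>R x0"
        have "z \<in> B" unfolding z_def using nb ax x0 at t
          unfolding norm_ball_def convex_def
          by (metis add_divide_distrib divide_nonneg_pos divide_self_if less_irrefl)
        moreover have "\<pi> s \<bullet> z = 1" unfolding z_def using ax p1 s at
          by (simp add: inner_add_right add_divide_distrib[symmetric])
        moreover have "a *\<^sub>R x + t *\<^sub>R x0 = (a+t) *\<^sub>R z" unfolding z_def using at
          by (simp add: scaleR_add_right)
        ultimately show ?thesis using d1[OF s] at unfolding Ncone_def exposed_face_def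
          by force
      qed
      moreover have "m + t *\<^sub>R x0 = s + (a *\<^sub>R x + t *\<^sub>R x0)" using ax(4)
        by (simp add: algebra_simps)
      ultimately show "m + t *\<^sub>R x0 \<in> (+) s ` Ncone B (\<pi> s)" by blast
    qed
    obtain M where M: "M > 0" "\<forall>z\<in>elem_set B D \<pi>. norm z \<le> M"
      using \<pi>(3) unfolding bounded_pos by blast
    define t where "t = (M + norm m + 1) / norm x0"
    have nx: "norm x0 > 0" using x0nz by simp
    have t0: "t \<ge> 0" unfolding t_def using M nx by simp
    have "norm (m + t *\<^sub>R x0) \<ge> norm (t *\<^sub>R x0) - norm m"
      by (metis add.commute norm_diff_ineq add_diff_cancel_right' norm_triangle_ineq2 diff_le_eq le_diff_eq)
    moreover have "norm (t *\<^sub>R x0) = M + norm m + 1" unfolding t_def using nx M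
      by simp
    ultimately have "norm (m + t *\<^sub>R x0) > M" by simp
    then show False using M(2) inset[OF t0] by fastforce
  qed
  define wc where "wc = (dual_mink B q + W) / 2"
  have dq0: "dual_mink B q \<ge> 0" using dual_nonneg[OF nb] .
  have wc: "0 < wc" "wc < W" "dual_mink B q \<le> wc" using dq dq0 Wpos unfolding wc_def by auto
  have fw: "fermat_weber_point B (insert m D)
      (\<lambda>x. (if x \<in> D then w x else 0) + (if x = m then wc else 0)) m"
    unfolding fermat_weber_point_def
  proof
    fix y
    have a: "mink B (m - s) \<le> \<pi> s \<bullet> (m - s)" if s: "s \<in> D" for s
    proof (cases "dual_mink B (\<pi> s) = 1")
      case True
      then obtain t x where tx: "0 \<le> t" "x \<in> B" "\<pi> s \<bullet> x = 1" "m - s = t *\<^sub>R x"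
        using mem[OF s] unfolding Ncone_def exposed_face_def by auto
      have "mink B (m - s) \<le> t" using mink_le[OF nb tx(1)] tx by auto
      then show ?thesis using tx by simp
    next
      case False
      hence "m - s = 0" using mem[OF s] unfolding Ncone_def by simp
      moreover have "mink B 0 \<le> 0" using mink_le[of B 0 0] nb nb_zero[OF nb] by force
      ultimately show ?thesis by simp
    qed
    have b: "\<pi> s \<bullet> (y - s) \<le> mink B (y - s)" if s: "s \<in> D" for s
    proof -
      have "\<pi> s \<bullet> (y - s) \<le> dual_mink B (\<pi> s) * mink B (y - s)" by (rule key_ineq[OF nb])
      also have "\<dots> \<le> mink B (y - s)" using dle[OF s] mink_nonneg[OF nb, of "y - s"]
        using mult_right_mono[of "dual_mink B (\<pi> s)" 1 "mink B (y - s)"] by simp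
      finally show ?thesis .
    qed
    have c: "(-q) \<bullet> (y - m) \<le> wc * mink B (y - m)"
    proof -
      have "(-q) \<bullet> (y - m) \<le> dual_mink B (-q) * mink B (y - m)" by (rule key_ineq[OF nb])
      also have "\<dots> \<le> wc * mink B (y - m)" using dual_neg[OF nb, of q] wc(3) mink_nonneg[OF nb, of "y - m"]
        by (simp add: mult_right_mono)
      finally show ?thesis .
    qed
    have d: "mink B 0 \<le> 0" using mink_le[of B 0 0] nb nb_zero[OF nb] by force
    have eq: "(\<Sum>s\<in>D. w s * (\<pi> s \<bullet> (m - s))) = (\<Sum>s\<in>D. w s * (\<pi> s \<bullet> (y - s))) + (-q) \<bullet> (y - m)"
    proof -
      have "(-q) \<bullet> (y - m) = (\<Sum>s\<in>D. w s * (\<pi> s \<bullet> (m - y)))"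
        unfolding q_def by (simp add: inner_sum_left inner_diff_right sum_subtractf right_diff_distrib)
      moreover have "(\<Sum>s\<in>D. w s * (\<pi> s \<bullet> (m - s))) = (\<Sum>s\<in>D. w s * (\<pi> s \<bullet> (y - s)) + w s * (\<pi> s \<bullet> (m - y)))"
        by (intro sum.cong) (auto simp: inner_diff_right algebra_simps)
      ultimately show ?thesis by (simp add: sum.distrib)
    qed
    have "(\<Sum>s\<in>D. w s * mink B (m - s)) + wc * mink B (m - m)
          \<le> (\<Sum>s\<in>D. w s * (\<pi> s \<bullet> (m - s)))"
    proof -
      have "(\<Sum>s\<in>D. w s * mink B (m - s)) \<le> (\<Sum>s\<in>D. w s * (\<pi> s \<bullet> (m - s)))"
        using a assms(3) by (intro sum_mono mult_left_mono) auto
      moreover have "wc * mink B (m - m) \<le> 0" using d wc(1) by (simp add: mult_nonneg_nonpos)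
      ultimately show ?thesis by simp
    qed
    also have "\<dots> \<le> (\<Sum>s\<in>D. w s * mink B (y - s)) + wc * mink B (y - m)"
    proof -
      have "(\<Sum>s\<in>D. w s * (\<pi> s \<bullet> (y - s))) \<le> (\<Sum>s\<in>D. w s * mink B (y - s))"
        using b assms(3) by (intro sum_mono mult_left_mono) auto
      then show ?thesis using eq c by simp
    qed
    finally show "(\<Sum>s\<in>insert m D. ((if s \<in> D then w s else 0) + (if s = m then wc else 0)) * mink B (m - s))
      \<le> (\<Sum>s\<in>insert m D. ((if s \<in> D then w s else 0) + (if s = m then wc else 0)) * mink B (y - s))"
      using sum_insert_weights[OF assms(2), where c=m and w=w and wc=wc and g="\<lambda>s. mink B (m - s)"]
        sum_insert_weights[OF assms(2), where c=m and w=w and wc=wc and g="\<lambda>s. mink B (y - s)"] by linarith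
  qed
  show ?thesis using fw wc unfolding W_def by blast
qed

end
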